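(* Consider single-shot measurement learning (SSML) as described in the context, with unchanged halting rule (halt when the recorded consecutive-success counter reaches $M_H$), where the recorded labels are corrupted according to either the binary-symmetric noise model or the false-negative noise model with parameter $q>0$. Then the halting time $T$ satisfies $$\mathbb{E}[T]\ge\mathbb{E}\big[X_{M_H}(1-q)\big]=\frac{1-(1-q)^{M_H}}{q(1-q)^{M_H}}.$$ In particular, for $qM_H\gg1$, $\mathbb{E}[T]\gtrsim\frac{1}{q}e^{qM_H}$.
   Context: Let $d\ge2$, $\mathcal{H}=\mathbb{C}^d$, $|\psi_\tau\rangle$ an unknown pure state available in arbitrarily many copies, $\{\hat U(\mathbf{p}):\mathbf{p}\in\mathcal{P}\subset\mathbb{R}^m\}$ a family of unitaries, $|f\rangle$ a fixed fiducial state, $F(\mathbf{p})=|\langle f|\hat U(\mathbf{p})|\psi_\tau\rangle|^2$. SSML with $\alpha,\beta>0$ and threshold $M_H\in\mathbb{N}$: at step $n$ a fresh copy is transformed by $\hat U(\mathbf{p}^{(n)})$ and measured with $\{|f\rangle\langle f|,\mathbb{1}-|f\rangle\langle f|\}$, producing a true outcome $y_n\in\{s,u\}$ with $\mathbb{P}(y_n=s\mid\text{past})=F(\mathbf{p}^{(n)})$. The controller only sees a recorded label $m_n\in\{s,u\}$. If $m_n=s$, the counter is incremented, $M_S^{(n)}=M_S^{(n-1)}+1$, and $\mathbf{p}^{(n+1)}=\mathbf{p}^{(n)}$; if $m_n=u$, $M_S^{(n)}=0$ and $\mathbf{p}^{(n+1)}=\mathbf{p}^{(n)}+\alpha(M_S^{(n-1)}+1)^{-\beta}\mathbf{r}_n$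 with $\mathbf{r}_n$ a random direction. The halting time is $T=\inf\{n\ge1:M_S^{(n)}=M_H\}$. Binary-symmetric noise (parameter $q\in(0,1/2)$): $\mathbb{P}(m_n\ne y_n)=q$, independently across steps and of all other randomness conditionally on the true label. False-negative noise (parameter $q\in(0,1)$): $\mathbb{P}(m_n=u\mid y_n=s)=q$, $\mathbb{P}(m_n=s\mid y_n=s)=1-q$, $\mathbb{P}(m_n=u\mid y_n=u)=1$, independently across steps. For $p\in(0,1)$ and $k\in\mathbb{N}$, $X_k(p)$ is the waiting time until the first occurrence of $k$ consecutive successes in an i.i.d. Bernoulli$(p)$ sequence. *)

theory Defs
  imports "HOL-Probability.Probability"
begin

definition cinner :: "complex^'d \<Rightarrow> complex^'d \<Rightarrow> complex" where
  "cinner u v = (\<Sum>i\<in>UNIV. cnj (u $ i) * v $ i)"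

definition unit_cvec :: "complex^'d \<Rightarrow> bool" where
  "unit_cvec v \<longleftrightarrow> (\<Sum>i\<in>UNIV. (cmod (v $ i))\<^sup>2) = 1"

definition unitary_cmat :: "complex^'d^'d \<Rightarrow> bool" where
  "unitary_cmat A \<longleftrightarrow>
     (\<forall>i j. (\<Sum>k\<in>UNIV. A $ i $ k * cnj (A $ j $ k)) = (if i = j then 1 else 0))"

definition fidelity :: "complex^'d \<Rightarrow> ('p \<Rightarrow> complex^'d^'d) \<Rightarrow> complex^'d \<Rightarrow> 'p \<Rightarrow> real" where
  "fidelity f U \<psi> p = (cmod (cinner f (U p *v \<psi>)))\<^sup>2"

text \<open>Noise models acting on the true label (True = s, False = u).\<close>
datatype noise_model = BSC | FN

definition noise_pmf :: "noise_model \<Rightarrow> real \<Rightarrow> bool \<Rightarrow> bool pmf" where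
  "noise_pmf nm q y = (case nm of
      BSC \<Rightarrow> map_pmf (\<lambda>flip. if flip then \<not> y else y) (bernoulli_pmf q)
    | FN \<Rightarrow> (if y then bernoulli_pmf (1 - q) else return_pmf False))"

definition rec_pmf :: "noise_model \<Rightarrow> real \<Rightarrow> real \<Rightarrow> bool pmf" where
  "rec_pmf nm q Fp = bind_pmf (bernoulli_pmf Fp) (noise_pmf nm q)"

text \<open>One SSML step on the state (parameter p^(n), counter M_S^(n-1)); the state
  with counter = MH is absorbing (the procedure has halted).\<close>
definition ssml_step ::
  "(real^'m \<Rightarrow> real) \<Rightarrow> noise_model \<Rightarrow> real \<Rightarrow> real \<Rightarrow> real \<Rightarrow> (real^'m) measure \<Rightarrow> nat
   \<Rightarrow> (real^'m) \<times> nat \<Rightarrow> ((real^'m) \<times> nat) measure" where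
  "ssml_step F nm q \<alpha> \<beta> R MH s = (case s of (p, c) \<Rightarrow>
     if c = MH then return borel (p, c)
     else bind (measure_pmf (rec_pmf nm q (F p)))
            (\<lambda>m. if m then return borel (p, Suc c)
                 else distr R borel (\<lambda>r. (p + (\<alpha> * real (Suc c) powr (- \<beta>)) *\<^sub>R r, 0))))"

primrec ssml_dist ::
  "(real^'m \<Rightarrow> real) \<Rightarrow> noise_model \<Rightarrow> real \<Rightarrow> real \<Rightarrow> real \<Rightarrow> (real^'m) measure \<Rightarrow> nat
   \<Rightarrow> real^'m \<Rightarrow> nat \<Rightarrow> ((real^'m) \<times> nat) measure" where
  "ssml_dist F nm q \<alpha> \<beta> R MH p0 0 = return borel (p0, 0)"
| "ssml_dist F nm q \<alpha> \<beta> R MH p0 (Suc n) =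
     bind (ssml_dist F nm q \<alpha> \<beta> R MH p0 n) (ssml_step F nm q \<alpha> \<beta> R MH)"

text \<open>E[T] = sum over n >= 0 of P(T > n); T > n iff the counter has not reached MH
  after n steps.\<close>
definition ssml_ET ::
  "(real^'m \<Rightarrow> real) \<Rightarrow> noise_model \<Rightarrow> real \<Rightarrow> real \<Rightarrow> real \<Rightarrow> (real^'m) measure \<Rightarrow> nat
   \<Rightarrow> real^'m \<Rightarrow> ennreal" where
  "ssml_ET F nm q \<alpha> \<beta> R MH p0 =
     (\<Sum>n. emeasure (ssml_dist F nm q \<alpha> \<beta> R MH p0 n) {s. snd s \<noteq> MH})"

text \<open>X_k(p): waiting time for k consecutive successes in i.i.d. Bernoulli(p) trials,
  via the (absorbed) run-length counter.\<close>
primrec run_dist :: "nat \<Rightarrow> real \<Rightarrow> nat \<Rightarrow> nat pmf" where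
  "run_dist k p 0 = return_pmf 0"
| "run_dist k p (Suc n) = bind_pmf (run_dist k p n)
     (\<lambda>c. if c = k then return_pmf c
          else map_pmf (\<lambda>b. if b then Suc c else 0) (bernoulli_pmf p))"

definition expected_wait :: "nat \<Rightarrow> real \<Rightarrow> ennreal" where
  "expected_wait k p = (\<Sum>n. ennreal (measure_pmf.prob (run_dist k p n) {c. c \<noteq> k}))"

end

theory Submission
  imports Defs
begin

lemma run_support: "set_pmf (run_dist k p n) \<subseteq> {..k}"
proof (induction n)
  case 0 then show ?case by simp
next
  case (Suc n)
  show ?case
  proof
    fix x assume "x \<in> set_pmf (run_dist k p (Suc n))"
    then obtain c where c: "c \<in> set_pmf (run_dist k p n)"
      and x: "x \<in> set_pmf (if c = k then return_pmf c
          else map_pmf (\<lambda>b. if b then Suc c else 0) (bernoulli_pmf p))"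
      by auto
    from c Suc have "c \<le> k" by auto
    with x show "x \<in> {..k}" by (auto split: if_splits)
  qed
qed

lemma run_exp:
  fixes g :: "nat \<Rightarrow> real"
  assumes p: "0 \<le> p" "p \<le> 1" and B: "\<And>c. \<bar>g c\<bar> \<le> B"
  shows "measure_pmf.expectation (run_dist k p (Suc n)) g =
    measure_pmf.expectation (run_dist k p n) (\<lambda>c. if c = k then g k else p * g (Suc c) + (1-p) * g 0)"
proof -
  have "measure_pmf.expectation (run_dist k p (Suc n)) g =
     (\<integral>c. measure_pmf.expectation (if c = k then return_pmf c
          else map_pmf (\<lambda>b. if b then Suc c else 0) (bernoulli_pmf p)) g \<partial>measure_pmf (run_dist k p n))"
    unfolding run_dist.simps measure_pmf_bind
    apply (rule integral_bind[where K="count_space UNIV" and B=B and B'=1])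
    apply simp
    apply (simp add: B)
    apply (simp add: space_subprob_algebra prob_space_imp_subprob_space measure_pmf.prob_space_axioms)
    apply (rule prob_space.finite_measure, rule measure_pmf.prob_space_axioms)
    apply (simp add: measure_pmf.emeasure_space_1)
    done
  also have "\<dots> = measure_pmf.expectation (run_dist k p n) (\<lambda>c. if c = k then g k else p * g (Suc c) + (1-p) * g 0)"
    using p by (intro Bochner_Integration.integral_cong) (auto simp: integral_map_pmf algebra_simps)
  finally show ?thesis .
qed

lemma run_integrable: "integrable (measure_pmf (run_dist k p n)) (g :: nat \<Rightarrow> real)"
  by (rule integrable_measure_pmf_finite) (meson finite_atMost finite_subset run_support)

lemma run_AE: "AE c in measure_pmf (run_dist k p n). c \<le> k"
  using run_support by (auto simp: AE_measure_pmf_iff)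

lemma expected_wait_formula:
  fixes p q :: real and k :: nat
  assumes p: "0 < p" "p < 1" and qdef: "q = 1 - p"
  shows "expected_wait k p = ennreal ((1 - p ^ k) / (q * p ^ k))"
proof -
  define h where "h c = (1 / p ^ k - 1 / p ^ (min c k)) / q" for c
  define t where "t n = measure_pmf.prob (run_dist k p n) {c. c \<noteq> k}" for n
  define e where "e n = measure_pmf.expectation (run_dist k p n) h" for n
  have q: "0 < q" using p qdef by simp
  have hle: "h c \<le> h 0" and hge: "0 \<le> h c" for c
  proof -
    have "p ^ (min c k) \<le> 1" using p by (simp add: power_le_one)
    moreover have "p ^ k \<le> p ^ (min c k)" using p by (intro power_decreasing) auto
    moreover have "0 < p ^ k" "0 < p ^ min c k" using p by auto
    ultimately have "1 / p ^ (min c k) \<ge> 1" "1 / p ^ k \<ge> 1 / p ^ (min c k)"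
      by (auto simp: field_simps)
    then show "h c \<le> h 0" "0 \<le> h c" unfolding h_def using q
      by (auto simp: divide_right_mono)
  qed
  have habs: "\<bar>h c\<bar> \<le> h 0" for c using hle hge by simp
  have hk: "h k = 0" by (simp add: h_def)
  have hstep: "p * h (Suc c) + (1 - p) * h 0 = h c - 1" if "c < k" for c
  proof -
    have "min (Suc c) k = Suc c" "min c k = c" using that by auto
    moreover have "1 / p ^ Suc c = (1 / p ^ c) / p" by simp
    ultimately have hh: "h (Suc c) = (1 / p ^ k - (1 / p ^ c) / p) / q" "h c = (1 / p ^ k - 1 / p ^ c) / q"
      "h 0 = (1 / p ^ k - 1) / q" unfolding h_def by auto
    have key: "p * ((A - B / p) / q) + (1 - p) * ((A - 1) / q) = (A - B) / q - 1" for A B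
    proof -
      have 1: "(1-p)*((A-1)/q) = A - 1" using qdef q by simp
      have "p*(A - B/p) = p*A - B" using p by (simp add: right_diff_distrib)
      then have 2: "p*((A - B/p)/q) = (p*A - B)/q" by (metis times_divide_eq_right)
      have "p*A - B = (A - B) - q * A" unfolding qdef by (simp add: algebra_simps)
      then have 3: "(p*A - B)/q = (A - B)/q - A" using q by (simp add: diff_divide_distrib)
      show ?thesis unfolding 1 2 3 by simp
    qed
    show ?thesis unfolding hh by (rule key)
  qed
  have t_eq: "t n = measure_pmf.expectation (run_dist k p n) (indicator {c. c \<noteq> k})" for n
    unfolding t_def by simp
  have estep: "e (Suc n) = e n - t n" for n
  proof -
    have "e (Suc n) = measure_pmf.expectation (run_dist k p n)
        (\<lambda>c. if c = k then h k else p * h (Suc c) + (1-p) * h 0)"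
      unfolding e_def using p by (intro run_exp[where B="h 0"] habs) auto
    also have "\<dots> = measure_pmf.expectation (run_dist k p n) (\<lambda>c. h c - indicator {c. c \<noteq> k} c)"
      using run_AE[of k p n] by (intro integral_cong_AE) (auto simp: hk hstep)
    also have "\<dots> = e n - t n"
      unfolding e_def t_eq by (rule Bochner_Integration.integral_diff) (rule run_integrable)+
    finally show ?thesis .
  qed
  have e0: "e 0 = h 0" by (simp add: e_def)
  have psum: "(\<Sum>i<n. t i) = h 0 - e n" for n
    by (induction n) (simp_all add: e0 estep)
  have e_nonneg: "0 \<le> e n" for n unfolding e_def by (rule integral_nonneg_AE) (simp add: hge)
  have t_nonneg: "0 \<le> t n" for n by (simp add: t_def)
  have e_le: "e n \<le> h 0 * t n" for n
  proof -
    have "e n \<le> measure_pmf.expectation (run_dist k p n) (\<lambda>c. h 0 * indicator {c. c \<noteq> k} c)"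
      unfolding e_def using run_AE[of k p n]
      by (intro integral_mono_AE run_integrable) (auto simp: hk hle split: split_indicator)
    then show ?thesis by (simp add: t_eq)
  qed
  have summ: "summable t"
    by (rule summableI_nonneg_bounded[where x="h 0"]) (auto simp: t_nonneg psum e_nonneg)
  have "t \<longlonglongrightarrow> 0" using summ by (rule summable_LIMSEQ_zero)
  then have "(\<lambda>n. h 0 * t n) \<longlonglongrightarrow> 0" by (auto intro: tendsto_mult_right_zero)
  then have "e \<longlonglongrightarrow> 0"
    by (rule tendsto_sandwich[rotated 2, OF tendsto_const]) (auto simp: e_nonneg e_le)
  then have "(\<lambda>n. h 0 - e n) \<longlonglongrightarrow> h 0 - 0" by (intro tendsto_intros)
  then have "t sums h 0" unfolding sums_def psum by simp
  then have "expected_wait k p = ennreal (h 0)"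
    unfolding expected_wait_def t_def[symmetric] by (rule suminf_ennreal_eq[OF t_nonneg])
  also have "h 0 = (1 - p ^ k) / (q * p ^ k)"
    unfolding h_def using p q by (simp add: field_simps)
  finally show ?thesis .
qed


definition cl :: "real \<Rightarrow> real" where "cl x = max 0 (min 1 x)"
definition rsp where "rsp nm q x = pmf (rec_pmf nm q x) True"

lemma bern_cl: "bernoulli_pmf x = bernoulli_pmf (cl x)"
  by (rule pmf_eqI) (simp add: bernoulli_pmf.rep_eq cl_def split: split_max split_min)

lemma rsp_formula:
  assumes "0 \<le> q" "q \<le> 1"
  shows "rsp nm q x = cl x * pmf (noise_pmf nm q True) True + (1 - cl x) * pmf (noise_pmf nm q False) True"
proof -
  have "0 \<le> cl x" "cl x \<le> 1" by (auto simp: cl_def)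
  then show ?thesis unfolding rsp_def rec_pmf_def pmf_bind bern_cl[of x]
    by simp
qed

lemma rsp_bounds:
  assumes "(nm = BSC \<and> 0 < q \<and> q < 1/2) \<or> (nm = FN \<and> 0 < q \<and> q < 1)"
  shows "0 \<le> rsp nm q x" "rsp nm q x \<le> 1 - q" "rsp nm q x \<le> 1"
proof -
  have c: "0 \<le> cl x" "cl x \<le> 1" by (auto simp: cl_def)
  have q: "0 \<le> q" "q \<le> 1" using assms by auto
  show "0 \<le> rsp nm q x" "rsp nm q x \<le> 1" unfolding rsp_def by (simp_all add: pmf_le_1)
  show "rsp nm q x \<le> 1 - q"
  proof (cases nm)
    case BSC
    then have "q < 1/2" using assms by auto
    have e: "{x. \<not> x} = {False}" "{x::bool. x} = {True}" by auto
    have n: "pmf (noise_pmf nm q True) True = 1 - q" "pmf (noise_pmf nm q False) True = q"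
      using BSC q e by (auto simp: noise_pmf_def pmf_map vimage_def measure_pmf_single)
    moreover have "(1 - cl x) * q \<le> (1 - cl x) * (1 - q)"
      using c \<open>q < 1/2\<close> by (intro mult_left_mono) auto
    moreover have "rsp nm q x = cl x * (1 - q) + (1 - cl x) * q"
      using rsp_formula[OF q, of nm x] unfolding n .
    moreover have "cl x * (1 - q) + (1 - cl x) * (1 - q) = 1 - q" by algebra
    ultimately show ?thesis by linarith
  next
    case FN
    have "pmf (noise_pmf nm q True) True = 1 - q" "pmf (noise_pmf nm q False) True = 0"
      using FN q by (auto simp: noise_pmf_def)
    then show ?thesis using c q rsp_formula[OF q, of nm x]
      by (simp add: mult_left_le_one_le)
  qed
qed

lemma rsp_measurable:
  assumes "0 \<le> q" "q \<le> 1" and F: "F \<in> borel_measurable M"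
  shows "(\<lambda>x. rsp nm q (F x)) \<in> borel_measurable M"
  unfolding rsp_formula[OF assms(1,2)] cl_def using F by measurable

lemma y_step:
  assumes pp: "0 \<le> pp" "pp \<le> 1" and j: "1 \<le> j" "j \<le> k"
  shows "measure_pmf.prob (run_dist k pp (Suc n)) {c. j \<le> c} =
    (1 - pp) * measure_pmf.prob (run_dist k pp n) {c. k \<le> c}
      + pp * measure_pmf.prob (run_dist k pp n) {c. j - 1 \<le> c}"
proof -
  have "measure_pmf.prob (run_dist k pp (Suc n)) {c. j \<le> c}
      = measure_pmf.expectation (run_dist k pp (Suc n)) (indicator {c. j \<le> c})" by simp
  also have "\<dots> = measure_pmf.expectation (run_dist k pp n)
     (\<lambda>c. if c = k then indicator {c. j \<le> c} k
          else pp * indicator {c. j \<le> c} (Suc c) + (1-pp) * indicator {c. j \<le> c} 0)"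
    by (rule run_exp[OF pp, where B=1]) (simp split: split_indicator)
  also have "\<dots> = measure_pmf.expectation (run_dist k pp n)
     (\<lambda>c. (1 - pp) * indicator {c. k \<le> c} c + pp * indicator {c. j - 1 \<le> c} c)"
    using run_AE[of k pp n] j by (intro integral_cong_AE) (auto split: split_indicator)
  also have "\<dots> = (1 - pp) * measure_pmf.prob (run_dist k pp n) {c. k \<le> c}
      + pp * measure_pmf.prob (run_dist k pp n) {c. j - 1 \<le> c}"
    by (subst Bochner_Integration.integral_add) (auto intro: run_integrable)
  finally show ?thesis .
qed


context
  fixes F :: "real^'m \<Rightarrow> real" and nm :: noise_model and q \<alpha> \<beta> :: real and R :: "(real^'m) measure" and MH :: nat
  assumes Fm: "F \<in> borel_measurable borel" and Rp: "prob_space R" and Rs: "sets R = sets borel"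
    and q01: "0 \<le> q" "q \<le> 1"
begin

definition gmap :: "real^'m \<Rightarrow> nat \<Rightarrow> real^'m \<Rightarrow> (real^'m) \<times> nat" where
  "gmap p c r = (p + (\<alpha> * real (Suc c) powr (- \<beta>)) *\<^sub>R r, 0)"

lemma spaceR: "space R = UNIV"
  using sets_eq_imp_space_eq[OF Rs] by simp

lemma gmap_meas: "gmap p c \<in> measurable R borel"
proof -
  have "gmap p c \<in> borel_measurable borel"
    unfolding gmap_def by (intro borel_measurable_continuous_onI continuous_intros)
  then show ?thesis by (subst measurable_cong_sets[OF Rs refl])
qed

lemma Nbranch:
  "(if m then return borel (p, Suc c) else distr R borel (\<lambda>r. (p + (\<alpha> * real (Suc c) powr (- \<beta>)) *\<^sub>R r, 0)))
    \<in> space (prob_algebra borel)"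
proof -
  have "prob_space (distr R borel (gmap p c))"
    by (rule prob_space.prob_space_distr[OF Rp gmap_meas])
  then show ?thesis unfolding gmap_def[symmetric]
    by (auto simp: space_prob_algebra prob_space_return)
qed

lemma K_prob_alg: "ssml_step F nm q \<alpha> \<beta> R MH s \<in> space (prob_algebra borel)"
proof (cases s)
  case (Pair p c)
  show ?thesis
  proof (cases "c = MH")
    case True then show ?thesis using Pair
      by (simp add: ssml_step_def space_prob_algebra prob_space_return)
  next
    case False
    have M: "measure_pmf (rec_pmf nm q (F p)) \<in> space (prob_algebra (count_space UNIV))"
      by (simp add: space_prob_algebra measure_pmf.prob_space_axioms)
    have N: "(\<lambda>m. if m then return borel (p, Suc c) else distr R borel (\<lambda>r. (p + (\<alpha> * real (Suc c) powr (- \<beta>)) *\<^sub>R r, 0)))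
        \<in> count_space UNIV \<rightarrow>\<^sub>M prob_algebra borel"
      using Nbranch by auto
    show ?thesis using Pair False
      apply (simp add: ssml_step_def)
      using prob_space_bind'[OF M N] sets_bind'[OF M N]
      by (simp add: space_prob_algebra)
  qed
qed

lemma K_emeasure:
  assumes X: "X \<in> sets borel"
  shows "emeasure (ssml_step F nm q \<alpha> \<beta> R MH (p, c)) X =
    (if c = MH then indicator X (p, c)
     else ennreal (rsp nm q (F p)) * indicator X (p, Suc c)
        + ennreal (1 - rsp nm q (F p)) * emeasure R {r. gmap p c r \<in> X})"
proof (cases "c = MH")
  case True then show ?thesis using X by (simp add: ssml_step_def)
next
  case False
  have M: "measure_pmf (rec_pmf nm q (F p)) \<in> space (prob_algebra (count_space UNIV))"
    by (simp add: space_prob_algebra measure_pmf.prob_space_axioms)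
  have N: "(\<lambda>m. if m then return borel (p, Suc c) else distr R borel (\<lambda>r. (p + (\<alpha> * real (Suc c) powr (- \<beta>)) *\<^sub>R r, 0)))
      \<in> count_space UNIV \<rightarrow>\<^sub>M prob_algebra borel"
    using Nbranch by auto
  have "emeasure (ssml_step F nm q \<alpha> \<beta> R MH (p, c)) X =
     (\<integral>\<^sup>+m. emeasure (if m then return borel (p, Suc c) else distr R borel (gmap p c)) X
        \<partial>measure_pmf (rec_pmf nm q (F p)))"
  proof -
    have gm: "gmap p c = (\<lambda>r. (p + (\<alpha> * real (Suc c) powr (- \<beta>)) *\<^sub>R r, 0))"
      by (simp add: fun_eq_iff gmap_def)
    show ?thesis using False unfolding gm by (simp add: ssml_step_def emeasure_bind_prob_algebra[OF M N X])
  qed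
  also have "\<dots> = (\<Sum>m\<in>UNIV. emeasure (if m then return borel (p, Suc c) else distr R borel (gmap p c)) X
        * pmf (rec_pmf nm q (F p)) m)"
    by (rule nn_integral_measure_pmf_support) auto
  also have "\<dots> = ennreal (rsp nm q (F p)) * indicator X (p, Suc c)
        + ennreal (1 - rsp nm q (F p)) * emeasure R {r. gmap p c r \<in> X}"
    using X by (cases "(p, Suc c) \<in> X") (simp_all add: UNIV_bool pmf_False_conv_True rsp_def emeasure_distr[OF gmap_meas X]
        spaceR vimage_def mult.commute)
  finally show ?thesis using False by simp
qed

lemma snd_meas: "(snd :: (real^'m) \<times> nat \<Rightarrow> nat) \<in> measurable borel (count_space UNIV)"
proof -
  have "snd -` {a} = (UNIV :: (real^'m) set) \<times> {a}" for a :: nat by auto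
  moreover have "closed ((UNIV :: (real^'m) set) \<times> {a :: nat})" for a
    by (intro closed_Times) auto
  ultimately show ?thesis
    by (auto simp: measurable_count_space_eq2_countable)
qed

lemma sec_meas:
  assumes X: "X \<in> sets borel"
  shows "(\<lambda>p. emeasure R {r. gmap p i r \<in> X}) \<in> borel_measurable borel"
proof -
  interpret prob_space R by (rule Rp)
  define Q where "Q = (\<lambda>(p, r). gmap p i r) -` X"
  have cm: "(\<lambda>(p, r). gmap p i r) \<in> borel_measurable borel"
    unfolding gmap_def case_prod_beta
    by (intro borel_measurable_continuous_onI continuous_intros)
  have "Q \<in> sets (borel :: ((real^'m) \<times> (real^'m)) measure)"
    unfolding Q_def using measurable_sets[OF cm X] by simp
  also have "sets (borel :: ((real^'m) \<times> (real^'m)) measure) = sets (borel \<Otimes>\<^sub>M R)"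
    by (simp add: borel_prod[symmetric] sets_pair_measure_cong[OF refl Rs])
  finally have "(\<lambda>x. emeasure R (Pair x -` Q)) \<in> borel_measurable borel"
    by (rule measurable_emeasure_Pair)
  moreover have "Pair x -` Q = {r. gmap x i r \<in> X}" for x by (auto simp: Q_def)
  ultimately show ?thesis by simp
qed

lemma K_meas: "ssml_step F nm q \<alpha> \<beta> R MH \<in> measurable borel (subprob_algebra borel)"
proof (rule measurable_subprob_algebra)
  fix s show "subprob_space (ssml_step F nm q \<alpha> \<beta> R MH s)"
    using K_prob_alg[of s] by (auto simp: space_prob_algebra intro: prob_space_imp_subprob_space)
  show "sets (ssml_step F nm q \<alpha> \<beta> R MH s) = sets borel"
    using K_prob_alg[of s] by (auto simp: space_prob_algebra)
next
  fix X :: "((real^'m) \<times> nat) set" assume X: "X \<in> sets borel"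
  define f where "f i s = (if i = MH then indicator X (fst s, i)
     else ennreal (rsp nm q (F (fst s))) * indicator X (fst s, Suc i)
        + ennreal (1 - rsp nm q (F (fst s))) * emeasure R {r. gmap (fst s) i r \<in> X})"
    for i :: nat and s :: "(real^'m) \<times> nat"
  have "(\<lambda>s. f (snd s) s) \<in> borel_measurable borel"
  proof (rule measurable_compose_countable'[OF _ snd_meas])
    fix i :: nat
    have i1: "(\<lambda>s::(real^'m) \<times> nat. indicator X (fst s, j) :: ennreal) \<in> borel_measurable borel" for j
    proof -
      have "(\<lambda>s::(real^'m) \<times> nat. (fst s, j)) \<in> borel_measurable borel"
        by (intro borel_measurable_continuous_onI continuous_intros)
      moreover have "(indicator X :: _ \<Rightarrow> ennreal) \<in> borel_measurable borel"
        using X by (rule borel_measurable_indicator)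
      ultimately show ?thesis by (rule measurable_compose)
    qed
    have fm: "(\<lambda>s::(real^'m) \<times> nat. fst s) \<in> borel_measurable borel"
      by (intro borel_measurable_continuous_onI continuous_intros)
    have i2: "(\<lambda>s::(real^'m) \<times> nat. emeasure R {r. gmap (fst s) i r \<in> X}) \<in> borel_measurable borel"
      by (rule measurable_compose[OF fm sec_meas[OF X]]) 
    have i3: "(\<lambda>s::(real^'m) \<times> nat. rsp nm q (F (fst s))) \<in> borel_measurable borel"
      by (rule rsp_measurable[OF q01]) (rule measurable_compose[OF fm Fm])
    show "(\<lambda>s. f i s) \<in> borel_measurable borel"
      unfolding f_def using i1 i2 i3 by measurable
  qed auto
  moreover have "emeasure (ssml_step F nm q \<alpha> \<beta> R MH s) X = f (snd s) s" for s
    using K_emeasure[OF X, of "fst s" "snd s"] by (simp add: f_def)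
  ultimately show "(\<lambda>s. emeasure (ssml_step F nm q \<alpha> \<beta> R MH s) X) \<in> borel_measurable borel"
    by simp
qed

lemma K_meas_prob: "ssml_step F nm q \<alpha> \<beta> R MH \<in> borel \<rightarrow>\<^sub>M prob_algebra borel"
  by (rule measurable_prob_algebraI[OF _ K_meas]) (use K_prob_alg in \<open>auto simp: space_prob_algebra\<close>)

lemma P_prob_alg: "ssml_dist F nm q \<alpha> \<beta> R MH p0 n \<in> space (prob_algebra borel)"
proof (induction n)
  case 0 then show ?case by (simp add: space_prob_algebra prob_space_return)
next
  case (Suc n)
  have A: "ssml_dist F nm q \<alpha> \<beta> R MH p0 n \<in> space (prob_algebra borel)" by (rule Suc)
  show ?case
    using prob_space_bind'[OF A K_meas_prob] sets_bind'[OF A K_meas_prob]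
    by (simp add: space_prob_algebra)
qed

lemma Aj_sets: "{s :: (real^'m) \<times> nat. j \<le> snd s} \<in> sets borel"
proof -
  have "snd -` {j..} \<inter> space borel \<in> sets (borel :: ((real^'m) \<times> nat) measure)"
    by (rule measurable_sets[OF snd_meas]) simp
  moreover have "snd -` {j..} \<inter> space borel = {s :: (real^'m) \<times> nat. j \<le> snd s}" by auto
  ultimately show ?thesis by simp
qed

lemma x_step:
  assumes j: "1 \<le> j" "j \<le> MH" and rs: "\<And>x. rsp nm q x \<le> pp" "\<And>x. 0 \<le> rsp nm q x"
    and pp: "0 \<le> pp" "pp \<le> 1"
  shows "measure (ssml_dist F nm q \<alpha> \<beta> R MH p0 (Suc n)) {s. j \<le> snd s}
    \<le> (1 - pp) * measure (ssml_dist F nm q \<alpha> \<beta> R MH p0 n) {s. MH \<le> snd s}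
      + pp * measure (ssml_dist F nm q \<alpha> \<beta> R MH p0 n) {s. j - 1 \<le> snd s}"
proof -
  define P where "P = ssml_dist F nm q \<alpha> \<beta> R MH p0 n"
  have A: "P \<in> space (prob_algebra borel)" unfolding P_def by (rule P_prob_alg)
  then interpret P: prob_space P by (simp add: space_prob_algebra)
  have sP: "sets P = sets borel" using A by (simp add: space_prob_algebra)
  define G where "G s = (1 - pp) * indicator {s. MH \<le> snd s} s + pp * indicator {s. j - 1 \<le> snd s} s"
    for s :: "(real^'m) \<times> nat"
  have S1: "{s :: (real^'m) \<times> nat. MH \<le> snd s} \<in> sets P" "{s :: (real^'m) \<times> nat. j - 1 \<le> snd s} \<in> sets P"
    using Aj_sets sP by auto
  have Gint: "integrable P G" unfolding G_def using S1
    by (intro Bochner_Integration.integrable_add integrable_mult_right integrable_real_indicator) (auto simp: less_top[symmetric])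
  have Gnn: "0 \<le> G s" for s using pp by (simp add: G_def)
  have pw: "emeasure (ssml_step F nm q \<alpha> \<beta> R MH s) {s. j \<le> snd s} \<le> ennreal (G s)" for s
  proof (cases s)
    case (Pair p c)
    note KE = K_emeasure[OF Aj_sets, of p c]
    show ?thesis
    proof (cases "c = MH")
      case True
      then show ?thesis using KE Pair j by (simp add: G_def)
    next
      case False
      have e: "{r. gmap p c r \<in> {s. j \<le> snd s}} = {}" using j by (auto simp: gmap_def)
      show ?thesis
      proof (cases "j \<le> Suc c")
        case True
        have "rsp nm q (F p) \<le> G s" using True pp rs(1)[of "F p"] Pair
          by (auto simp: G_def split: split_indicator)
        then show ?thesis using KE False True e Pair by (simp add: ennreal_leI)
      next
        case False2: False
        then show ?thesis using KE False e Pair by (simp add: Gnn)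
      qed
    qed
  qed
  have "emeasure (ssml_dist F nm q \<alpha> \<beta> R MH p0 (Suc n)) {s. j \<le> snd s}
      = (\<integral>\<^sup>+s. emeasure (ssml_step F nm q \<alpha> \<beta> R MH s) {s. j \<le> snd s} \<partial>P)"
    unfolding P_def ssml_dist.simps
    by (rule emeasure_bind_prob_algebra[OF P_prob_alg K_meas_prob Aj_sets])
  also have "\<dots> \<le> (\<integral>\<^sup>+s. ennreal (G s) \<partial>P)"
    by (intro nn_integral_mono pw)
  also have "\<dots> = ennreal (\<integral>s. G s \<partial>P)"
    by (rule nn_integral_eq_integral[OF Gint]) (simp add: Gnn)
  also have "(\<integral>s. G s \<partial>P) = (1 - pp) * measure P {s. MH \<le> snd s} + pp * measure P {s. j - 1 \<le> snd s}"
    unfolding G_def using S1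
    by (subst Bochner_Integration.integral_add) (auto intro!: integrable_real_indicator simp: less_top[symmetric])
  finally have fin: "emeasure (ssml_dist F nm q \<alpha> \<beta> R MH p0 (Suc n)) {s. j \<le> snd s} \<le>
     ennreal ((1 - pp) * measure P {s. MH \<le> snd s} + pp * measure P {s. j - 1 \<le> snd s})" .
  interpret P2: prob_space "ssml_dist F nm q \<alpha> \<beta> R MH p0 (Suc n)"
    using P_prob_alg[of p0 "Suc n"] by (simp add: space_prob_algebra)
  have "0 \<le> (1 - pp) * measure P {s. MH \<le> snd s} + pp * measure P {s. j - 1 \<le> snd s}"
    using pp by simp
  then show ?thesis using fin unfolding P_def[symmetric] P2.emeasure_eq_measure
    by (simp add: ennreal_le_iff)
qed

lemma compare:
  assumes rs: "\<And>x. rsp nm q x \<le> pp" "\<And>x. 0 \<le> rsp nm q x"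
    and pp: "0 \<le> pp" "pp \<le> 1" and MH: "1 \<le> MH"
  shows "\<forall>j \<le> MH. measure (ssml_dist F nm q \<alpha> \<beta> R MH p0 n) {s. j \<le> snd s}
          \<le> measure_pmf.prob (run_dist MH pp n) {c. j \<le> c}"
proof (induction n)
  case 0
  show ?case
  proof (intro allI impI)
    fix j assume "j \<le> MH"
    have "{s::(real^'m) \<times> nat. j \<le> snd s} \<in> sets borel" by (rule Aj_sets)
    then show "measure (ssml_dist F nm q \<alpha> \<beta> R MH p0 0) {s. j \<le> snd s}
          \<le> measure_pmf.prob (run_dist MH pp 0) {c. j \<le> c}"
      by (simp add: measure_return measure_pmf_single indicator_def)
  qed
next
  case (Suc n)
  show ?case
  proof (intro allI impI)
    fix j assume j: "j \<le> MH"
    interpret P2: prob_space "ssml_dist F nm q \<alpha> \<beta> R MH p0 (Suc n)"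
      using P_prob_alg[of p0 "Suc n"] by (simp add: space_prob_algebra)
    show "measure (ssml_dist F nm q \<alpha> \<beta> R MH p0 (Suc n)) {s. j \<le> snd s}
          \<le> measure_pmf.prob (run_dist MH pp (Suc n)) {c. j \<le> c}"
    proof (cases "j = 0")
      case True
      then show ?thesis using P2.prob_le_1[of UNIV] by simp
    next
      case False
      then have j1: "1 \<le> j" by simp
      have "measure (ssml_dist F nm q \<alpha> \<beta> R MH p0 (Suc n)) {s. j \<le> snd s}
        \<le> (1 - pp) * measure (ssml_dist F nm q \<alpha> \<beta> R MH p0 n) {s. MH \<le> snd s}
          + pp * measure (ssml_dist F nm q \<alpha> \<beta> R MH p0 n) {s. j - 1 \<le> snd s}"
        by (rule x_step[OF j1 j rs pp])
      also have "\<dots> \<le> (1 - pp) * measure_pmf.prob (run_dist MH pp n) {c. MH \<le> c}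
          + pp * measure_pmf.prob (run_dist MH pp n) {c. j - 1 \<le> c}"
        using Suc.IH j pp by (intro add_mono mult_left_mono) auto
      also have "\<dots> = measure_pmf.prob (run_dist MH pp (Suc n)) {c. j \<le> c}"
        by (rule y_step[OF pp j1 j, symmetric])
      finally show ?thesis .
    qed
  qed
qed

lemma ET_ge:
  assumes rs: "\<And>x. rsp nm q x \<le> pp" "\<And>x. 0 \<le> rsp nm q x"
    and pp: "0 \<le> pp" "pp \<le> 1" and MH: "1 \<le> MH"
  shows "expected_wait MH pp \<le> ssml_ET F nm q \<alpha> \<beta> R MH p0"
  unfolding expected_wait_def ssml_ET_def
proof (rule suminf_le)
  fix n
  interpret P: prob_space "ssml_dist F nm q \<alpha> \<beta> R MH p0 n"
    using P_prob_alg[of p0 n] by (simp add: space_prob_algebra)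
  have sP: "sets (ssml_dist F nm q \<alpha> \<beta> R MH p0 n) = sets borel"
    using P_prob_alg[of p0 n] by (simp add: space_prob_algebra)
  have E1: "{s :: (real^'m) \<times> nat. MH \<le> snd s} \<in> P.events" using Aj_sets sP by auto
  have E2: "{s :: (real^'m) \<times> nat. snd s = MH} \<in> P.events"
  proof -
    have "{s :: (real^'m) \<times> nat. snd s = MH} = {s. MH \<le> snd s} - {s. Suc MH \<le> snd s}" by auto
    then show ?thesis using Aj_sets sP by auto
  qed
  have "P.prob {s. snd s = MH} \<le> P.prob {s. MH \<le> snd s}"
    using E1 by (intro P.finite_measure_mono) auto
  also have "\<dots> \<le> measure_pmf.prob (run_dist MH pp n) {c. MH \<le> c}"
    using compare[OF rs pp MH, of p0 n] by simp
  also have "measure_pmf.prob (run_dist MH pp n) {c. MH \<le> c} = measure_pmf.prob (run_dist MH pp n) {MH}"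
    using run_AE[of MH pp n]
    by (intro measure_pmf.finite_measure_eq_AE) (auto)
  finally have le: "P.prob {s. snd s = MH} \<le> measure_pmf.prob (run_dist MH pp n) {MH}" .
  have "measure_pmf.prob (run_dist MH pp n) {c. c \<noteq> MH} = 1 - measure_pmf.prob (run_dist MH pp n) {MH}"
    using measure_pmf.prob_compl[of "{MH}" "run_dist MH pp n"] by (simp add: Compl_eq_Diff_UNIV[symmetric] Collect_neg_eq)
  also have "\<dots> \<le> 1 - P.prob {s. snd s = MH}" using le by simp
  also have "\<dots> = P.prob {s. snd s \<noteq> MH}"
    using P.prob_compl[OF E2] sets_eq_imp_space_eq[OF sP] by (simp add: Collect_neg_eq Compl_eq_Diff_UNIV)
  finally show "ennreal (measure_pmf.prob (run_dist MH pp n) {c. c \<noteq> MH})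
      \<le> emeasure (ssml_dist F nm q \<alpha> \<beta> R MH p0 n) {s. snd s \<noteq> MH}"
    by (simp add: P.emeasure_eq_measure ennreal_leI)
qed auto

end

lemma fid_meas:
  fixes f \<psi> :: "complex^'d" and U :: "real^'m \<Rightarrow> complex^'d^'d"
  assumes "U \<in> borel_measurable borel"
  shows "fidelity f U \<psi> \<in> borel_measurable borel"
proof -
  have "(\<lambda>A :: complex^'d^'d. (cmod (cinner f (A *v \<psi>)))\<^sup>2) \<in> borel_measurable borel"
    unfolding cinner_def matrix_vector_mult_def
    by (intro borel_measurable_continuous_onI) (simp, intro continuous_intros)
  from measurable_compose[OF assms this] show ?thesis
    by (simp add: fidelity_def[abs_def])
qed

lemma exp_bound:
  fixes q :: real assumes "0 < q" "q < 1"
  shows "(exp (q * real M) - 1) / q \<le> (1 - (1 - q) ^ M) / (q * (1 - q) ^ M)"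
proof -
  have "1 - q \<le> exp (- q)" using exp_ge_add_one_self[of "-q"] by simp
  then have "(1 - q) ^ M \<le> exp (- q) ^ M" using assms by (intro power_mono) auto
  also have "\<dots> = exp (- (q * real M))" by (simp add: exp_of_nat_mult[symmetric] mult.commute)
  finally have a: "(1 - q) ^ M \<le> inverse (exp (q * real M))" by (simp add: exp_minus)
  have pos: "0 < (1 - q) ^ M" using assms by simp
  have "exp (q * real M) \<le> 1 / (1 - q) ^ M"
    using a pos by (simp add: field_simps)
  also have "1 / x = (1 - x) / x + 1" if "0 < x" for x :: real
    using that by (simp add: diff_divide_distrib)
  then have "1 / (1 - q) ^ M = (1 - (1 - q) ^ M) / ((1 - q) ^ M) + 1"
    using pos by blast
  finally have "exp (q * real M) - 1 \<le> (1 - (1 - q) ^ M) / ((1 - q) ^ M)" by simp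
  then have "(exp (q * real M) - 1) / q \<le> ((1 - (1 - q) ^ M) / ((1 - q) ^ M)) / q"
    using assms by (intro divide_right_mono) auto
  then show ?thesis by (simp add: mult.commute)
qed

theorem theorem4:
  fixes f \<psi> :: "complex^'d" and U :: "real^'m \<Rightarrow> complex^'d^'d"
    and R :: "(real^'m) measure" and p0 :: "real^'m"
    and \<alpha> \<beta> q :: real and MH :: nat and nm :: noise_model
  assumes "CARD('d) \<ge> 2"
    and "unit_cvec f" and "unit_cvec \<psi>"
    and "\<forall>p. unitary_cmat (U p)"
    and "U \<in> borel_measurable borel"
    and "prob_space R" and "sets R = sets borel"
    and "AE r in R. norm r = 1"
    and "\<alpha> > 0" and "\<beta> > 0" and "MH \<ge> 1"
    and "(nm = BSC \<and> 0 < q \<and> q < 1/2) \<or> (nm = FN \<and> 0 < q \<and> q < 1)"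
  shows "expected_wait MH (1 - q) \<le> ssml_ET (fidelity f U \<psi>) nm q \<alpha> \<beta> R MH p0
       \<and> expected_wait MH (1 - q) = ennreal ((1 - (1 - q) ^ MH) / (q * (1 - q) ^ MH))
       \<and> ennreal ((exp (q * real MH) - 1) / q) \<le> expected_wait MH (1 - q)"
proof -
  have q: "0 < q" "q < 1" using assms(12) by auto
  have rs: "\<And>x. rsp nm q x \<le> 1 - q" "\<And>x. 0 \<le> rsp nm q x"
    using rsp_bounds[OF assms(12)] by auto
  have A: "expected_wait MH (1 - q) \<le> ssml_ET (fidelity f U \<psi>) nm q \<alpha> \<beta> R MH p0"
    by (rule ET_ge[OF fid_meas[OF assms(5)] assms(6) assms(7) _ _ rs]) (use q assms(11) in auto)
  have B: "expected_wait MH (1 - q) = ennreal ((1 - (1 - q) ^ MH) / (q * (1 - q) ^ MH))"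
    by (rule expected_wait_formula) (use q in auto)
  have C: "ennreal ((exp (q * real MH) - 1) / q) \<le> expected_wait MH (1 - q)"
    unfolding B by (rule ennreal_leI, rule exp_bound[OF q])
  show ?thesis using A B C by blast
qed

end
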